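(* Let $r\in\mathbb N$ and let $\xi_1,\dots,\xi_m$ be i.i.d. centred random variables with unit variance and finite moments of all orders, and let $g_1,\dots,g_m$ be i.i.d. standard Gaussian random variables. Define $$\chi_r(\xi):=m^{-r/2}\sum_{\substack{n_1,\dots,n_r\in[m]\\ n_i\ne n_{i+1},\ i=1,\dots,r-1}}\xi_{n_1}\cdots\xi_{n_r},$$ and $\chi_r(g)$ analogously. Then there is a constant $C>0$ depending only on $r$ and on the law of $\xi_1$ such that $$\|\chi_r(\xi)\|_{L^2}^2\le\|\chi_r(g)\|_{L^2}^2+\frac Cm.$$
   Context: $\|X\|_{L^2}=(\mathbb E|X|^2)^{1/2}$. *)

theory Defs
  imports "HOL-Probability.Probability"
begin

text \<open>Admissible index tuples (n_1,...,n_r) in [m]^r (here [m] = {0..<m}) with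
  consecutive entries distinct, represented as extensional functions on {..<r}.\<close>
definition adm_tuples :: "nat \<Rightarrow> nat \<Rightarrow> (nat \<Rightarrow> nat) set" where
  "adm_tuples r m = {n \<in> {..<r} \<rightarrow>\<^sub>E {..<m}. \<forall>i. Suc i < r \<longrightarrow> n i \<noteq> n (Suc i)}"

definition chi :: "nat \<Rightarrow> nat \<Rightarrow> (nat \<Rightarrow> real) \<Rightarrow> real" where
  "chi r m x = inverse (sqrt (real m)) ^ r * (\<Sum>n\<in>adm_tuples r m. \<Prod>i<r. x (n i))"

end

theory Submission
  imports Defs
begin

definition cnt :: "nat \<Rightarrow> (nat \<Rightarrow> nat) \<Rightarrow> nat \<Rightarrow> nat" where
  "cnt r n k = card {i. i \<in> {..<r} \<and> n i = k}"

lemma prod_fiber: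
  fixes x :: "nat \<Rightarrow> 'a::comm_monoid_mult"
  assumes "n ` {..<r} \<subseteq> {..<m}"
  shows "(\<Prod>i<r. x (n i)) = (\<Prod>k<m. x k ^ cnt r n k)"
proof -
  have "(\<Prod>k<m. x k ^ cnt r n k) = (\<Prod>k<m. \<Prod>i\<in>{i. i \<in> {..<r} \<and> n i = k}. x (n i))"
    unfolding cnt_def by (rule prod.cong) auto
  also have "\<dots> = (\<Prod>i<r. x (n i))"
    by (rule prod.group) (use assms in auto)
  finally show ?thesis by simp
qed

lemma sum_cnt:
  assumes "n ` {..<r} \<subseteq> S" "finite S"
  shows "(\<Sum>k\<in>S. cnt r n k) = r"
proof -
  have "(\<Sum>k\<in>S. cnt r n k) = (\<Sum>k\<in>S. \<Sum>i\<in>{i. i \<in> {..<r} \<and> n i = k}. (1::nat))"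
    unfolding cnt_def by simp
  also have "\<dots> = (\<Sum>i<r. (1::nat))"
    by (rule sum.group) (use assms in auto)
  finally show ?thesis by simp
qed

lemma adm_image: "n \<in> adm_tuples r m \<Longrightarrow> n ` {..<r} \<subseteq> {..<m}"
  unfolding adm_tuples_def by auto

lemma chi_sq:
  assumes "m \<ge> 1"
  shows "(chi r m x)\<^sup>2 = inverse (sqrt (real m)) ^ (2*r) *
    (\<Sum>n\<in>adm_tuples r m. \<Sum>n'\<in>adm_tuples r m. \<Prod>k<m. x k ^ (cnt r n k + cnt r n' k))"
proof -
  have "(chi r m x)\<^sup>2 = inverse (sqrt (real m)) ^ (2*r) *
    (\<Sum>n\<in>adm_tuples r m. \<Sum>n'\<in>adm_tuples r m. (\<Prod>i<r. x (n i)) * (\<Prod>i<r. x (n' i)))"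
    unfolding chi_def power2_eq_square sum_product[symmetric] mult_2 power_add by (simp add: algebra_simps)
  also have "\<dots> = inverse (sqrt (real m)) ^ (2*r) *
    (\<Sum>n\<in>adm_tuples r m. \<Sum>n'\<in>adm_tuples r m. \<Prod>k<m. x k ^ (cnt r n k + cnt r n' k))"
    by (intro arg_cong2[where f="(*)"] refl sum.cong)
       (simp add: prod_fiber[OF adm_image] power_add prod.distrib)
  finally show ?thesis .
qed

lemma finite_adm: "finite (adm_tuples r m)"
proof -
  have "adm_tuples r m \<subseteq> {..<r} \<rightarrow>\<^sub>E {..<m}" unfolding adm_tuples_def by auto
  moreover have "finite ({..<r} \<rightarrow>\<^sub>E {..<m})" by (rule finite_PiE) auto
  ultimately show ?thesis by (rule finite_subset)
qed

lemma expect_chi: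
  assumes "prob_space \<nu>" "\<And>j. integrable \<nu> (\<lambda>y. y^j)" "m \<ge> 1"
  shows "(\<integral>x. (chi r m x)\<^sup>2 \<partial>PiM {..<m} (\<lambda>_. \<nu>)) = inverse (sqrt (real m)) ^ (2*r) *
    (\<Sum>n\<in>adm_tuples r m. \<Sum>n'\<in>adm_tuples r m. \<Prod>k<m. \<integral>y. y ^ (cnt r n k + cnt r n' k) \<partial>\<nu>)"
proof -
  interpret P: product_sigma_finite "\<lambda>_. \<nu>"
    unfolding product_sigma_finite_def using assms(1) prob_space_imp_sigma_finite by blast
  have int: "integrable (PiM {..<m} (\<lambda>_. \<nu>)) (\<lambda>x. \<Prod>k\<in>{..<m}. (\<lambda>y. y ^ (cnt r n k + cnt r n' k)) (x k))" for n n'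
    by (rule P.product_integrable_prod) (auto simp: assms(2))
  have eq: "(\<integral>x. (\<Prod>k\<in>{..<m}. (\<lambda>y. y ^ (cnt r n k + cnt r n' k)) (x k)) \<partial>PiM {..<m} (\<lambda>_. \<nu>))
     = (\<Prod>k<m. \<integral>y. y ^ (cnt r n k + cnt r n' k) \<partial>\<nu>)" for n n'
    by (rule P.product_integral_prod) (auto simp: assms(2))
  have "(\<integral>x. (chi r m x)\<^sup>2 \<partial>PiM {..<m} (\<lambda>_. \<nu>)) = (\<integral>x. inverse (sqrt (real m)) ^ (2*r) *
    (\<Sum>n\<in>adm_tuples r m. \<Sum>n'\<in>adm_tuples r m. \<Prod>k<m. x k ^ (cnt r n k + cnt r n' k)) \<partial>PiM {..<m} (\<lambda>_. \<nu>))"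
    using chi_sq[OF assms(3)] by simp
  also have "\<dots> = inverse (sqrt (real m)) ^ (2*r) *
    (\<Sum>n\<in>adm_tuples r m. \<Sum>n'\<in>adm_tuples r m. (\<integral>x. (\<Prod>k<m. x k ^ (cnt r n k + cnt r n' k)) \<partial>PiM {..<m} (\<lambda>_. \<nu>)))"
    using int by (simp add: integrable_sum)
  also have "\<dots> = inverse (sqrt (real m)) ^ (2*r) *
    (\<Sum>n\<in>adm_tuples r m. \<Sum>n'\<in>adm_tuples r m. \<Prod>k<m. \<integral>y. y ^ (cnt r n k + cnt r n' k) \<partial>\<nu>)"
    using eq by simp
  finally show ?thesis .
qed

definition badset :: "nat \<Rightarrow> nat \<Rightarrow> ((nat \<Rightarrow> nat) \<times> (nat \<Rightarrow> nat)) set" where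
  "badset r m = {(n,n'). n \<in> adm_tuples r m \<and> n' \<in> adm_tuples r m \<and>
     (\<forall>k<m. cnt r n k + cnt r n' k \<noteq> 1) \<and> (\<exists>k<m. cnt r n k + cnt r n' k \<ge> 3)}"

lemma cnt_zero: "k \<notin> n ` {..<r} \<Longrightarrow> cnt r n k = 0"
  unfolding cnt_def by (auto simp: card_eq_0_iff)

lemma bad_S:
  assumes "(n,n') \<in> badset r m"
  shows "card (n ` {..<r} \<union> n' ` {..<r}) < r"
proof -
  define S where "S = n ` {..<r} \<union> n' ` {..<r}"
  define c where "c k = cnt r n k + cnt r n' k" for k
  have an: "n \<in> adm_tuples r m" and an': "n' \<in> adm_tuples r m"
    and no1: "\<forall>k<m. c k \<noteq> 1" and ex3: "\<exists>k<m. c k \<ge> 3"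
    using assms unfolding badset_def c_def by auto
  have Sm: "S \<subseteq> {..<m}" using adm_image[OF an] adm_image[OF an'] unfolding S_def by auto
  have fS: "finite S" unfolding S_def by auto
  have sumc: "(\<Sum>k\<in>S. c k) = 2 * r"
    unfolding c_def sum.distrib using sum_cnt[of n r S] sum_cnt[of n' r S] fS unfolding S_def by auto
  obtain k0 where k0: "k0 < m" "c k0 \<ge> 3" using ex3 by auto
  have k0S: "k0 \<in> S"
  proof (rule ccontr)
    assume "k0 \<notin> S"
    then have "c k0 = 0" unfolding c_def S_def by (auto simp: cnt_zero)
    with k0 show False by simp
  qed
  have ge2: "c k \<ge> 2" if "k \<in> S" for k
  proof -
    have "cnt r n k > 0 \<or> cnt r n' k > 0"
      using that unfolding S_def cnt_def by (auto simp: card_gt_0_iff)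
    then have "c k \<ge> 1" unfolding c_def by auto
    moreover have "c k \<noteq> 1" using no1 Sm that by auto
    ultimately show ?thesis by simp
  qed
  have "(\<Sum>k\<in>S. c k) = (\<Sum>k\<in>S. 2 + (c k - 2))"
    by (rule sum.cong) (auto dest: ge2)
  also have "\<dots> = 2 * card S + (\<Sum>k\<in>S. (c k - 2))"
    by (simp only: sum.distrib) simp
  finally have "2 * r = 2 * card S + (\<Sum>k\<in>S. (c k - 2))" using sumc by simp
  moreover have "(\<Sum>k\<in>S. (c k - 2)) \<ge> c k0 - 2"
    by (rule member_le_sum[OF k0S]) (auto simp: fS)
  ultimately show ?thesis using k0 unfolding S_def by linarith
qed

lemma decomp:
  assumes an: "n \<in> adm_tuples r m" and an': "n' \<in> adm_tuples r m"
    and cS: "card (n ` {..<r} \<union> n' ` {..<r}) \<le> d" and m1: "m \<ge> 1"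
  shows "\<exists>g h1 h2. g \<in> {..<d} \<rightarrow>\<^sub>E {..<m} \<and> h1 \<in> {..<r} \<rightarrow>\<^sub>E {..<d} \<and> h2 \<in> {..<r} \<rightarrow>\<^sub>E {..<d}
     \<and> n = restrict (g \<circ> h1) {..<r} \<and> n' = restrict (g \<circ> h2) {..<r}"
proof -
  define S where "S = n ` {..<r} \<union> n' ` {..<r}"
  have Sm: "S \<subseteq> {..<m}" using adm_image[OF an] adm_image[OF an'] unfolding S_def by auto
  have fS: "finite S" unfolding S_def by auto
  have cS': "card S \<le> d" using cS unfolding S_def .
  obtain e where e: "bij_betw e {0..<card S} S" using ex_bij_betw_nat_finite[OF fS] by blast
  define g where "g = restrict (\<lambda>j. if j < card S then e j else 0) {..<d}"
  define h where "h f = restrict (\<lambda>i. the_inv_into {0..<card S} e (f i)) {..<r}" for f :: "nat \<Rightarrow> nat"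
  have inj: "inj_on e {0..<card S}" and im: "e ` {0..<card S} = S" using e by (auto simp: bij_betw_def)
  have hin: "the_inv_into {0..<card S} e y \<in> {0..<card S}" if "y \<in> S" for y
    using the_inv_into_into[OF inj, of y "{0..<card S}"] that im by auto
  have hf: "e (the_inv_into {0..<card S} e y) = y" if "y \<in> S" for y
    using f_the_inv_into_f[OF inj, of y] that im by auto
  have g: "g \<in> {..<d} \<rightarrow>\<^sub>E {..<m}"
  proof -
    have "e j < m" if "j < card S" for j using that im Sm by auto
    then show ?thesis unfolding g_def using m1 by auto
  qed
  have h: "h f \<in> {..<r} \<rightarrow>\<^sub>E {..<d}" if "f ` {..<r} \<subseteq> S" for f
  proof -
    have "the_inv_into {0..<card S} e (f i) < d" if "i < r" for i
      using hin[of "f i"] \<open>f ` {..<r} \<subseteq> S\<close> that cS' by fastforce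
    then show ?thesis unfolding h_def by auto
  qed
  have rep: "f = restrict (g \<circ> h f) {..<r}" if "f ` {..<r} \<subseteq> S" "f \<in> adm_tuples r m" for f
  proof
    fix i show "f i = restrict (g \<circ> h f) {..<r} i"
    proof (cases "i < r")
      case True
      then have "f i \<in> S" using that by auto
      have "the_inv_into {0..<card S} e (f i) < card S" using hin[OF \<open>f i \<in> S\<close>] by simp
      moreover have "the_inv_into {0..<card S} e (f i) < d" using calculation cS' by simp
      ultimately show ?thesis using True hf[OF \<open>f i \<in> S\<close>] unfolding g_def h_def by simp
    next
      case False
      then show ?thesis using that(2) unfolding adm_tuples_def by (auto simp: PiE_def extensional_def)
    qed
  qed
  have s1: "n ` {..<r} \<subseteq> S" and s2: "n' ` {..<r} \<subseteq> S" unfolding S_def by auto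
  show ?thesis
    by (rule exI[of _ g], rule exI[of _ "h n"], rule exI[of _ "h n'"])
       (use g h[OF s1] h[OF s2] rep[OF s1 an] rep[OF s2 an'] in auto)
qed

lemma card_bad: "card (badset r m) * m \<le> r^(2*r) * m^r"
proof (cases "r = 0")
  case True
  then have "badset r m = {}" unfolding badset_def cnt_def by auto
  then show ?thesis by simp
next
  case False
  show ?thesis
  proof (cases "m = 0")
    case True then show ?thesis by simp
  next
    case m0: False
  define d where "d = r - 1"
  define G where "G = {..<d} \<rightarrow>\<^sub>E {..<m}"
  define H where "H = {..<r} \<rightarrow>\<^sub>E {..<d}"
  define F where "F = (\<lambda>(g::nat\<Rightarrow>nat,h1::nat\<Rightarrow>nat,h2::nat\<Rightarrow>nat). (restrict (g \<circ> h1) {..<r}, restrict (g \<circ> h2) {..<r}))"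
  have sub: "badset r m \<subseteq> F ` (G \<times> H \<times> H)"
  proof
    fix p assume p: "p \<in> badset r m"
    obtain n n' where pn: "p = (n,n')" by (cases p)
    have an: "n \<in> adm_tuples r m" and an': "n' \<in> adm_tuples r m" using p pn unfolding badset_def by auto
    have "card (n ` {..<r} \<union> n' ` {..<r}) \<le> d" using bad_S[of n n' r m] p pn unfolding d_def by auto
    moreover have "m \<ge> 1" using m0 by simp
    ultimately have "\<exists>g h1 h2. g \<in> {..<d} \<rightarrow>\<^sub>E {..<m} \<and> h1 \<in> {..<r} \<rightarrow>\<^sub>E {..<d} \<and> h2 \<in> {..<r} \<rightarrow>\<^sub>E {..<d}
     \<and> n = restrict (g \<circ> h1) {..<r} \<and> n' = restrict (g \<circ> h2) {..<r}" by (rule decomp[OF an an'])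
    then obtain g h1 h2 where
      "g \<in> G" "h1 \<in> H" "h2 \<in> H" "n = restrict (g \<circ> h1) {..<r}" "n' = restrict (g \<circ> h2) {..<r}"
      unfolding G_def H_def by blast
    then show "p \<in> F ` (G \<times> H \<times> H)"
      by (intro image_eqI[of _ _ "(g,h1,h2)"]) (simp_all add: pn F_def)
  qed
  have fin: "finite (G \<times> H \<times> H)" unfolding G_def H_def by (auto intro!: finite_PiE)
  have "card (badset r m) \<le> card (F ` (G \<times> H \<times> H))"
    by (rule card_mono[OF finite_imageI[OF fin] sub])
  also have "\<dots> \<le> card (G \<times> H \<times> H)" by (rule card_image_le[OF fin])
  also have "\<dots> = m^d * d^r * d^r"
    unfolding G_def H_def by (simp add: card_cartesian_product card_PiE)
  also have "\<dots> \<le> m^d * r^r * r^r"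
    unfolding d_def by (intro mult_mono power_mono) auto
  finally have "card (badset r m) * m \<le> m^d * r^r * r^r * m" by simp
  also have "\<dots> = r^(2*r) * m^r"
  proof -
    have "m^d * m = m^r" unfolding d_def using False by (metis One_nat_def Suc_pred power_Suc2 neq0_conv)
    moreover have "r^r * r^r = r^(2*r)" by (simp add: mult_2 power_add)
    ultimately show ?thesis by (metis mult.assoc mult.commute)
  qed
  finally show ?thesis .
  qed
qed

lemma term_bound:
  fixes M G :: "nat \<Rightarrow> real" and D :: real
  assumes M0: "M 0 = 1" and M1: "M 1 = 0" and M2: "M 2 = 1"
    and G0: "G 0 = 1" and G1: "G 1 = 0" and G2: "G 2 = 1" and Gnn: "\<And>j. G j \<ge> 0"
    and MD: "\<And>j. j \<le> 2*r \<Longrightarrow> \<bar>M j\<bar> \<le> D ^ j" and D1: "D \<ge> 1"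
    and an: "n \<in> adm_tuples r m" and an': "n' \<in> adm_tuples r m"
  shows "(\<Prod>k<m. M (cnt r n k + cnt r n' k)) \<le> (\<Prod>k<m. G (cnt r n k + cnt r n' k))
          + (if (n,n') \<in> badset r m then D^(2*r) else 0)"
proof -
  define c where "c k = cnt r n k + cnt r n' k" for k
  have cle: "c k \<le> 2*r" for k
  proof -
    have "cnt r n k \<le> r" "cnt r n' k \<le> r" unfolding cnt_def
      by (rule order.trans[OF card_mono[of "{..<r}"]], auto)+
    then show ?thesis unfolding c_def by simp
  qed
  show ?thesis
  proof (cases "\<exists>k<m. c k = 1")
    case True
    then obtain k where k: "k < m" "c k = 1" by auto
    have "(\<Prod>k<m. M (c k)) = 0" by (rule prod_zero) (simp, rule bexI[of _ k], simp_all add: k M1[unfolded One_nat_def])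
    moreover have "(\<Prod>k<m. G (c k)) = 0" by (rule prod_zero) (simp, rule bexI[of _ k], simp_all add: k G1[unfolded One_nat_def])
    ultimately show ?thesis unfolding c_def using D1 by (simp del: prod_zero_iff)
  next
    case no1: False
    show ?thesis
    proof (cases "\<exists>k<m. c k \<ge> 3")
      case False
      have "c k = 0 \<or> c k = 2" if "k < m" for k using no1 False that by fastforce
      then have "(\<Prod>k<m. M (c k)) = (\<Prod>k<m. G (c k))"
        by (intro prod.cong refl) (metis M0 M2 G0 G2 lessThan_iff)
      then show ?thesis unfolding c_def by (simp add: D1)
    next
      case True
      have bad: "(n,n') \<in> badset r m" using True no1 an an' unfolding badset_def c_def by auto
      have "(\<Prod>k<m. M (c k)) \<le> \<bar>\<Prod>k<m. M (c k)\<bar>" by simp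
      also have "\<dots> = (\<Prod>k<m. \<bar>M (c k)\<bar>)" by (rule abs_prod)
      also have "\<dots> \<le> (\<Prod>k<m. D ^ c k)" by (intro prod_mono) (auto simp: MD cle)
      also have "\<dots> = (\<Prod>k<m. D ^ cnt r n k) * (\<Prod>k<m. D ^ cnt r n' k)"
        unfolding c_def by (simp add: power_add prod.distrib)
      also have "\<dots> = D^r * D^r"
        using prod_fiber[OF adm_image[OF an], of "\<lambda>_. D"] prod_fiber[OF adm_image[OF an'], of "\<lambda>_. D"] by simp
      also have "\<dots> = D^(2*r)" by (simp add: mult_2 power_add)
      finally have "(\<Prod>k<m. M (c k)) \<le> D^(2*r)" .
      moreover have "(\<Prod>k<m. G (c k)) \<ge> 0" by (intro prod_nonneg) (auto simp: Gnn)
      ultimately show ?thesis using bad unfolding c_def by simp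
    qed
  qed
qed

theorem mainTheorem17:
  fixes r :: nat and \<mu> :: "real measure"
  assumes "prob_space \<mu>" and "sets \<mu> = sets borel"
    and "\<And>k::nat. integrable \<mu> (\<lambda>x. \<bar>x\<bar> ^ k)"
    and "(\<integral>x. x \<partial>\<mu>) = 0" and "(\<integral>x. x\<^sup>2 \<partial>\<mu>) = 1"
  shows "\<exists>C>0. \<forall>m\<ge>1.
    (\<integral>x. (chi r m x)\<^sup>2 \<partial>(PiM {..<m} (\<lambda>_. \<mu>)))
      \<le> (\<integral>x. (chi r m x)\<^sup>2 \<partial>(PiM {..<m} (\<lambda>_. std_normal_distribution))) + C / real m"
proof -
  interpret mu: prob_space \<mu> by fact
  have meas: "(\<lambda>x. x ^ j) \<in> borel_measurable \<mu>" for j :: nat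
  proof -
    have "(\<lambda>x::real. x ^ j) \<in> borel_measurable borel" by simp
    then show ?thesis by (subst measurable_cong_sets[OF assms(2) refl])
  qed
  have intM: "integrable \<mu> (\<lambda>x. x ^ j)" for j
    using assms(3)[of j] integrable_abs_iff[OF meas[of j]] by (simp add: power_abs)
  have pg: "prob_space std_normal_distribution"
    using real_dist_normal_dist real_distribution.axioms(1) by blast
  have intG: "integrable std_normal_distribution (\<lambda>x. x ^ j)" for j
    by (rule integrable_std_normal_distribution_moment)
  define M where "M j = (\<integral>x. x ^ j \<partial>\<mu>)" for j
  define G where "G j = (\<integral>x. x ^ j \<partial>std_normal_distribution)" for j
  define D where "D = 1 + (\<integral>x. \<bar>x\<bar> ^ (2*r) \<partial>\<mu>)"
  have M0: "M 0 = 1" unfolding M_def using mu.prob_space by simp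
  have M1: "M 1 = 0" unfolding M_def using assms(4) by simp
  have M2: "M 2 = 1" unfolding M_def using assms(5) by simp
  have G0: "G 0 = 1" unfolding G_def using prob_space.prob_space[OF pg] by simp
  have G1: "G 1 = 0" unfolding G_def by (rule integral_std_normal_distribution_moment_odd) simp
  have G2: "G 2 = 1" unfolding G_def using std_normal_distribution_even_moments(1)[of 1] by simp
  have Gnn: "G j \<ge> 0" for j
  proof (cases "even j")
    case True
    then obtain k where "j = 2 * k" by auto
    then show ?thesis unfolding G_def using std_normal_distribution_even_moments(1)[of k] by simp
  next
    case False
    then show ?thesis unfolding G_def using integral_std_normal_distribution_moment_odd[of j] by simp
  qed
  have absle: "\<bar>x\<bar> ^ j \<le> 1 + \<bar>x\<bar> ^ (2*r)" if "j \<le> 2*r" for x :: real and j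
  proof (cases "\<bar>x\<bar> \<le> 1")
    case True
    then have "\<bar>x\<bar> ^ j \<le> 1" by (simp add: power_le_one)
    then show ?thesis by (smt (verit) zero_le_power abs_ge_zero)
  next
    case False
    then have "\<bar>x\<bar> ^ j \<le> \<bar>x\<bar> ^ (2*r)" using that by (intro power_increasing) auto
    then show ?thesis by simp
  qed
  have D0: "(\<integral>x. \<bar>x\<bar> ^ (2*r) \<partial>\<mu>) \<ge> 0" by (rule integral_nonneg_AE) auto
  have D1: "D \<ge> 1" unfolding D_def using D0 by simp
  have MD: "\<bar>M j\<bar> \<le> D ^ j" if "j \<le> 2*r" for j
  proof (cases "j = 0")
    case True then show ?thesis using M0 by simp
  next
    case False
    have "\<bar>M j\<bar> \<le> (\<integral>x. \<bar>x ^ j\<bar> \<partial>\<mu>)" unfolding M_def by (rule integral_abs_bound)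
    also have "\<dots> \<le> (\<integral>x. 1 + \<bar>x\<bar> ^ (2*r) \<partial>\<mu>)"
      by (rule integral_mono) (auto simp: power_abs absle[OF that] intM assms(3))
    also have "\<dots> = D" unfolding D_def using mu.prob_space by (simp add: assms(3))
    also have "D \<le> D ^ j" using D1 False by (simp add: power_increasing[of 1 j D, simplified])
    finally show ?thesis .
  qed
  define K where "K = real (r^(2*r)) * D^(2*r)"
  have K0: "K \<ge> 0" unfolding K_def using D1 by simp
  show ?thesis
  proof (intro exI[of _ "K + 1"] conjI allI impI)
    show "K + 1 > 0" using K0 by simp
    fix m :: nat assume m1: "m \<ge> 1"
    define A where "A = adm_tuples r m"
    define s where "s = inverse (sqrt (real m)) ^ (2*r)"
    have s: "s = 1 / real m ^ r"
      unfolding s_def power_mult by (simp add: power_inverse divide_inverse)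
    have finA: "finite A" unfolding A_def by (rule finite_adm)
    have EM: "(\<integral>x. (chi r m x)\<^sup>2 \<partial>(PiM {..<m} (\<lambda>_. \<mu>))) =
      s * (\<Sum>n\<in>A. \<Sum>n'\<in>A. \<Prod>k<m. M (cnt r n k + cnt r n' k))"
      unfolding s_def A_def M_def by (rule expect_chi[OF assms(1) intM m1])
    have EG: "(\<integral>x. (chi r m x)\<^sup>2 \<partial>(PiM {..<m} (\<lambda>_. std_normal_distribution))) =
      s * (\<Sum>n\<in>A. \<Sum>n'\<in>A. \<Prod>k<m. G (cnt r n k + cnt r n' k))"
      unfolding s_def A_def G_def by (rule expect_chi[OF pg intG m1])
    have "(\<Sum>n\<in>A. \<Sum>n'\<in>A. \<Prod>k<m. M (cnt r n k + cnt r n' k)) \<le>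
      (\<Sum>n\<in>A. \<Sum>n'\<in>A. (\<Prod>k<m. G (cnt r n k + cnt r n' k)) + (if (n,n') \<in> badset r m then D^(2*r) else 0))"
      by (intro sum_mono term_bound[OF M0 M1 M2 G0 G1 G2 Gnn MD D1]) (auto simp: A_def)
    also have "\<dots> = (\<Sum>n\<in>A. \<Sum>n'\<in>A. \<Prod>k<m. G (cnt r n k + cnt r n' k)) +
       (\<Sum>n\<in>A. \<Sum>n'\<in>A. (if (n,n') \<in> badset r m then D^(2*r) else 0))"
      by (simp add: sum.distrib)
    also have "(\<Sum>n\<in>A. \<Sum>n'\<in>A. (if (n,n') \<in> badset r m then D^(2*r) else 0)) = real (card (badset r m)) * D^(2*r)"
    proof -
      have "(\<Sum>n\<in>A. \<Sum>n'\<in>A. (if (n,n') \<in> badset r m then D^(2*r) else 0)) =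
            (\<Sum>p\<in>A \<times> A. (if p \<in> badset r m then D^(2*r) else 0))"
        by (simp add: sum.cartesian_product)
      also have "\<dots> = (\<Sum>p\<in>(A \<times> A) \<inter> badset r m. D^(2*r))"
        by (rule sum.inter_restrict[symmetric]) (simp add: finA)
      also have "(A \<times> A) \<inter> badset r m = badset r m" unfolding A_def badset_def by auto
      finally show ?thesis by simp
    qed
    finally have le: "(\<Sum>n\<in>A. \<Sum>n'\<in>A. \<Prod>k<m. M (cnt r n k + cnt r n' k)) \<le>
       (\<Sum>n\<in>A. \<Sum>n'\<in>A. \<Prod>k<m. G (cnt r n k + cnt r n' k)) + real (card (badset r m)) * D^(2*r)" .
    have spos: "s \<ge> 0" unfolding s by simp
    have cb: "s * real (card (badset r m)) \<le> real (r^(2*r)) / real m"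
    proof -
      have "real (card (badset r m)) * real m \<le> real (r^(2*r)) * real m ^ r"
        using card_bad[of r m] by (metis of_nat_le_iff of_nat_mult of_nat_power)
      moreover have "real m > 0" using m1 by simp
      ultimately show ?thesis unfolding s by (simp add: field_simps)
    qed
    have "(\<integral>x. (chi r m x)\<^sup>2 \<partial>(PiM {..<m} (\<lambda>_. \<mu>))) \<le>
      (\<integral>x. (chi r m x)\<^sup>2 \<partial>(PiM {..<m} (\<lambda>_. std_normal_distribution))) + s * real (card (badset r m)) * D^(2*r)"
      unfolding EM EG using mult_left_mono[OF le spos] by (simp add: algebra_simps)
    also have "s * real (card (badset r m)) * D^(2*r) \<le> real (r^(2*r)) / real m * D^(2*r)"
      using cb D1 by (intro mult_right_mono) auto
    also have "\<dots> = K / real m" unfolding K_def by simp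
    also have "\<dots> \<le> (K + 1) / real m" using m1 by (simp add: divide_right_mono)
    finally show "(\<integral>x. (chi r m x)\<^sup>2 \<partial>(PiM {..<m} (\<lambda>_. \<mu>))) \<le>
      (\<integral>x. (chi r m x)\<^sup>2 \<partial>(PiM {..<m} (\<lambda>_. std_normal_distribution))) + (K + 1) / real m"
      by simp
  qed
qed

end
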